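(* Assume the setting in the context. Suppose that $B\cap\partial A=\overline{B_A^o\cap\partial A}\neq\emptyset$ and $f|_A$ is continuous on $A$. Then for any $\alpha>f_1$, $\liminf_{r\downarrow0}r^{d-1}\nu(B,r,\alpha\theta_dr^d/2)>0$.
   Context: Let $2\le d\le m$. $\mathcal M\subset\mathbb R^m$ is a $d$-dimensional $C^2$ submanifold of $\mathbb R^m$, closed in $\mathbb R^m$, with induced Riemannian metric; ${\rm dist}$ geodetic distance, $B(x,r):=\{y\in\mathcal M:{\rm dist}(x,y)\le r\}$, $v$ Riemannian volume. For $D\subset\mathcal M$: $D^o:=\mathcal M\setminus\overline{\mathcal M\setminus D}$, $\partial D:=\overline D\setminus D^o$. $A\subset\mathcal M$ is a compact $C^2$ submanifold-with-boundary of $\mathcal M$ (for each $y\in\partial A$ there is a chart $(U,g)$ of $\mathcal M$ with $0\in U$, $g(0)=y$, $g(U\cap\mathbb H)=g(U)\cap A$, $\mathbb H=\mathbb R^{d-1}\times[0,\infty)$). $B\subset A$ is closed and $B_A^o:=B\setminus\overline{A\setminus B}$. $f$ is a probability density w.r.t. $v$ vanishing outside $A$, $\mu$ the measure with density $f$, $f_1:=\inf_{x\in B\cap\partial A}f(x)$. $\theta_d:=\pi^{d/2}/\Gamma(1+d/2)$. For $D\subset\mathcal M$, $r>0$, $a>0$, the packing number $\nu(D,r,a)$ is the largest $m$ such that there exist $m$ pairwise disjoint closed geodetic balls $B(x_i,r)$ with centres $x_i\in D$, each with $\mu(B(x_i,r))\le a$. *)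

theory Defs
  imports "HOL-Analysis.Analysis"
begin

definition C2_on :: "('a::euclidean_space \<Rightarrow> 'b::euclidean_space) \<Rightarrow> 'a set \<Rightarrow> bool" where
  "C2_on g U \<longleftrightarrow> (\<exists>g' :: 'a \<Rightarrow> ('a \<Rightarrow>\<^sub>L 'b). \<exists>g'' :: 'a \<Rightarrow> ('a \<Rightarrow>\<^sub>L ('a \<Rightarrow>\<^sub>L 'b)).
      (\<forall>x\<in>U. (g has_derivative blinfun_apply (g' x)) (at x)) \<and>
      (\<forall>x\<in>U. (g' has_derivative blinfun_apply (g'' x)) (at x)) \<and>
      continuous_on U g'')"

definition chart :: "(real^'m) set \<Rightarrow> (real^'d) set \<Rightarrow> (real^'d \<Rightarrow> real^'m) \<Rightarrow> bool" where
  "chart M U g \<longleftrightarrow> open U \<and> C2_on g U \<and>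
     (\<forall>x\<in>U. \<forall>g'. (g has_derivative g') (at x) \<longrightarrow> inj g') \<and>
     g ` U \<subseteq> M \<and> openin (top_of_set M) (g ` U) \<and>
     inj_on g U \<and> continuous_on (g ` U) (inv_into U g)"

definition closed_C2_submanifold :: "(real^'m) set \<Rightarrow> ('d::finite) itself \<Rightarrow> bool" where
  "closed_C2_submanifold M (_::('d::finite) itself) \<longleftrightarrow> closed M \<and>
     (\<forall>y\<in>M. \<exists>(U::(real^'d) set) g. chart M U g \<and> y \<in> g ` U)"

definition man_interior :: "'a::topological_space set \<Rightarrow> 'a set \<Rightarrow> 'a set" where
  "man_interior M D = M - closure (M - D)"

definition man_boundary :: "'a::topological_space set \<Rightarrow> 'a set \<Rightarrow> 'a set" where
  "man_boundary M D = closure D - man_interior M D"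

text \<open>A is a compact C^2 submanifold-with-boundary of M (half space H = {x. 0 \<le> x$k},
for some coordinate k, i.e. R^{d-1} x [0,\<infinity>) up to a permutation of coordinates).\<close>
definition compact_C2_submanifold_with_boundary ::
    "(real^'m) set \<Rightarrow> ('d::finite) itself \<Rightarrow> (real^'m) set \<Rightarrow> bool" where
  "compact_C2_submanifold_with_boundary M (_::('d::finite) itself) A \<longleftrightarrow> compact A \<and> A \<subseteq> M \<and>
     (\<forall>y\<in>man_boundary M A. \<exists>(U::(real^'d) set) g k. chart M U g \<and> 0 \<in> U \<and> g 0 = y \<and>
        g ` (U \<inter> {x. 0 \<le> x $ k}) = g ` U \<inter> A)"

definition curve_length :: "(real \<Rightarrow> 'a::metric_space) \<Rightarrow> ennreal" where
  "curve_length \<gamma> = (SUP (n, t) \<in> {(n, t::nat \<Rightarrow> real). t 0 = 0 \<and> t n = 1 \<and>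
        (\<forall>i<n. t i \<le> t (Suc i))}.
      (\<Sum>i<n. ennreal (dist (\<gamma> (t i)) (\<gamma> (t (Suc i))))))"

text \<open>Geodesic distance on M (induced Riemannian metric): infimum of lengths of curves in M.\<close>
definition gdist :: "'a::real_normed_vector set \<Rightarrow> 'a \<Rightarrow> 'a \<Rightarrow> ennreal" where
  "gdist M x y = (INF \<gamma> \<in> {\<gamma>. path \<gamma> \<and> path_image \<gamma> \<subseteq> M \<and> pathstart \<gamma> = x \<and> pathfinish \<gamma> = y}.
       curve_length \<gamma>)"

definition gball :: "'a::real_normed_vector set \<Rightarrow> 'a \<Rightarrow> real \<Rightarrow> 'a set" where
  "gball M x r = {y\<in>M. gdist M x y \<le> ennreal r}"

definition riemannian_volume :: "(real^'m) set \<Rightarrow> ('d::finite) itself \<Rightarrow> (real^'m) measure \<Rightarrow> bool" where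
  "riemannian_volume M (_::('d::finite) itself) v \<longleftrightarrow> sets v = sets borel \<and> emeasure v (UNIV - M) = 0 \<and>
     (\<forall>(U::(real^'d) set) g g'. chart M U g \<longrightarrow> (\<forall>x\<in>U. (g has_derivative g' x) (at x)) \<longrightarrow>
        (\<forall>E \<in> sets lborel. E \<subseteq> U \<longrightarrow>
           emeasure v (g ` E) =
             (\<integral>\<^sup>+ x\<in>E. ennreal (sqrt (det (transpose (matrix (g' x)) ** matrix (g' x)))) \<partial>lborel)))"

definition mu :: "(real^'m) measure \<Rightarrow> (real^'m \<Rightarrow> real) \<Rightarrow> (real^'m) set \<Rightarrow> ennreal" where
  "mu v f S = (\<integral>\<^sup>+ y\<in>S. ennreal (f y) \<partial>v)"

definition packing_number :: "(real^'m) set \<Rightarrow> (real^'m) measure \<Rightarrow> (real^'m \<Rightarrow> real) \<Rightarrow>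
    (real^'m) set \<Rightarrow> real \<Rightarrow> real \<Rightarrow> enat" where
  "packing_number M v f D r a = (SUP S \<in> {S. finite S \<and> S \<subseteq> D \<and>
       (\<forall>x\<in>S. \<forall>y\<in>S. x \<noteq> y \<longrightarrow> gball M x r \<inter> gball M y r = {}) \<and>
       (\<forall>x\<in>S. mu v f (gball M x r) \<le> ennreal a)}. enat (card S))"

definition theta :: "nat \<Rightarrow> real" where
  "theta d = pi powr (real d / 2) / Gamma (1 + real d / 2)"

end

theory Submission
  imports Defs
begin
lemma gdist_ge: "ennreal (dist x y) \<le> gdist M x y"
  unfolding gdist_def
proof (rule INF_greatest)
  fix \<gamma> :: "real \<Rightarrow> 'a" assume "\<gamma> \<in> {\<gamma>. path \<gamma> \<and> path_image \<gamma> \<subseteq> M \<and> pathstart \<gamma> = x \<and> pathfinish \<gamma> = y}"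
  then have x: "\<gamma> 0 = x" and y: "\<gamma> 1 = y" by (auto simp: pathstart_def pathfinish_def)
  let ?t = "\<lambda>i::nat. if i = 0 then 0 else (1::real)"
  have "(1::nat, ?t) \<in> {(n, t::nat \<Rightarrow> real). t 0 = 0 \<and> t n = 1 \<and> (\<forall>i<n. t i \<le> t (Suc i))}" by auto
  then have "(\<Sum>i<1::nat. ennreal (dist (\<gamma> (?t i)) (\<gamma> (?t (Suc i))))) \<le> curve_length \<gamma>"
    unfolding curve_length_def by (rule SUP_upper2[where i="(1,?t)"]) auto
  then show "ennreal (dist x y) \<le> curve_length \<gamma>" using x y by simp
qed

lemma gball_sub: assumes "r \<ge> 0" shows "gball M x r \<subseteq> {y\<in>M. dist x y \<le> r}"
proof
  fix y assume "y \<in> gball M x r"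
  then have "y \<in> M" "gdist M x y \<le> ennreal r" by (auto simp: gball_def)
  then have "ennreal (dist x y) \<le> ennreal r" using gdist_ge order_trans by blast
  then show "y \<in> {y\<in>M. dist x y \<le> r}" using \<open>y\<in>M\<close> assms by (simp add: ennreal_le_iff)
qed

lemma packing_ge:
  assumes "finite S" "S \<subseteq> D" "\<forall>x\<in>S. \<forall>y\<in>S. x \<noteq> y \<longrightarrow> gball M x r \<inter> gball M y r = {}"
    "\<forall>x\<in>S. mu v f (gball M x r) \<le> ennreal a"
  shows "enat (card S) \<le> packing_number M v f D r a"
  unfolding packing_number_def by (rule SUP_upper) (use assms in auto)

lemma chart_reparam:
  fixes g :: "real^'d \<Rightarrow> real^'m" and T S :: "real^'d \<Rightarrow> real^'d"
  assumes ch: "chart M U g" and lT: "linear T" and lS: "linear S"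
    and ST: "\<And>x. S (T x) = x" and TS: "\<And>x. T (S x) = x"
  shows "chart M (T -` U) (g \<circ> T)"
proof -
  have bT: "bounded_linear T" and bS: "bounded_linear S" using lT lS linear_conv_bounded_linear by auto
  from ch have oU: "open U" and c2: "C2_on g U"
    and injd: "\<forall>x\<in>U. \<forall>g'. (g has_derivative g') (at x) \<longrightarrow> inj g'"
    and sub: "g ` U \<subseteq> M" and op: "openin (top_of_set M) (g ` U)"
    and inj: "inj_on g U" and ci: "continuous_on (g ` U) (inv_into U g)"
    by (auto simp: chart_def)
  from c2 obtain G' :: "real^'d \<Rightarrow> ((real^'d) \<Rightarrow>\<^sub>L (real^'m))" and G'' where
    d1: "\<forall>x\<in>U. (g has_derivative blinfun_apply (G' x)) (at x)" and
    d2: "\<forall>x\<in>U. (G' has_derivative blinfun_apply (G'' x)) (at x)" and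
    cG: "continuous_on U G''" unfolding C2_on_def by blast
  have contT: "continuous_on UNIV T" using lT by (rule linear_continuous_on[OF linear_conv_bounded_linear[THEN iffD1]])
  have contS: "continuous_on UNIV S" using lS by (rule linear_continuous_on[OF linear_conv_bounded_linear[THEN iffD1]])
  have img: "T ` (T -` U) = U" using TS by (metis surjI surj_image_vimage_eq)
  have oV: "open (T -` U)" using oU contT by (simp add: open_vimage)
  define Tb where "Tb = Blinfun T"
  have Tb: "blinfun_apply Tb = T" using bT by (simp add: Tb_def bounded_linear_Blinfun_apply)
  define \<Phi> where "\<Phi> = (\<lambda>X::((real^'d) \<Rightarrow>\<^sub>L (real^'m)). X o\<^sub>L Tb)"
  have b\<Phi>: "bounded_linear \<Phi>" unfolding \<Phi>_def
    by (rule bounded_bilinear.bounded_linear_left[OF bounded_bilinear_blinfun_compose])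
  define \<Psi> where "\<Psi> = (\<lambda>Y::((real^'d) \<Rightarrow>\<^sub>L ((real^'d) \<Rightarrow>\<^sub>L (real^'m))). Blinfun \<Phi> o\<^sub>L (Y o\<^sub>L Tb))"
  have b\<Psi>: "bounded_linear \<Psi>" unfolding \<Psi>_def
    by (rule bounded_linear_compose[OF bounded_bilinear.bounded_linear_right[OF bounded_bilinear_blinfun_compose]
        bounded_bilinear.bounded_linear_left[OF bounded_bilinear_blinfun_compose]])
  define H' where "H' = (\<lambda>x. \<Phi> (G' (T x)))"
  define H'' where "H'' = (\<lambda>x. \<Psi> (G'' (T x)))"
  have D1: "((g \<circ> T) has_derivative blinfun_apply (H' x)) (at x)" if "x \<in> T -` U" for x
  proof -
    have "((g \<circ> T) has_derivative (blinfun_apply (G' (T x)) \<circ> T)) (at x)"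
      by (rule diff_chain_at[OF bounded_linear_imp_has_derivative[OF bT]]) (use d1 that in auto)
    moreover have "blinfun_apply (G' (T x)) \<circ> T = blinfun_apply (H' x)"
      by (auto simp: H'_def \<Phi>_def Tb)
    ultimately show ?thesis by simp
  qed
  have D2: "(H' has_derivative blinfun_apply (H'' x)) (at x)" if "x \<in> T -` U" for x
  proof -
    have "((G' \<circ> T) has_derivative (blinfun_apply (G'' (T x)) \<circ> T)) (at x)"
      by (rule diff_chain_at[OF bounded_linear_imp_has_derivative[OF bT]]) (use d2 that in auto)
    then have "((\<lambda>x. \<Phi> ((G' \<circ> T) x)) has_derivative (\<lambda>h. \<Phi> ((blinfun_apply (G'' (T x)) \<circ> T) h))) (at x)"
      by (rule bounded_linear.has_derivative[OF b\<Phi>])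
    moreover have "(\<lambda>h. \<Phi> ((blinfun_apply (G'' (T x)) \<circ> T) h)) = blinfun_apply (H'' x)"
      by (auto simp: H''_def \<Psi>_def Tb bounded_linear_Blinfun_apply[OF b\<Phi>])
    ultimately show ?thesis by (simp add: H'_def o_def)
  qed
  have cH: "continuous_on (T -` U) H''"
    unfolding H''_def
    by (rule continuous_on_compose2[OF linear_continuous_on[OF b\<Psi>]])
       (auto intro!: continuous_on_compose2[OF cG] continuous_on_subset[OF contT])
  have C2: "C2_on (g \<circ> T) (T -` U)" unfolding C2_on_def using D1 D2 cH by blast
  have injd': "inj g'" if x: "x \<in> T -` U" and gd: "((g \<circ> T) has_derivative g') (at x)" for x g'
  proof -
    have "g' = blinfun_apply (H' x)" using has_derivative_unique[OF gd D1[OF x]] .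
    then have g': "g' = blinfun_apply (G' (T x)) \<circ> T" by (auto simp: H'_def \<Phi>_def Tb)
    have "inj (blinfun_apply (G' (T x)))" using injd d1 x by auto
    moreover have "inj T" using ST by (metis injI)
    ultimately show ?thesis using g' by (simp add: inj_compose)
  qed
  have im: "(g \<circ> T) ` (T -` U) = g ` U" by (metis image_comp img)
  have injV: "inj_on (g \<circ> T) (T -` U)"
    using inj ST by (auto simp: inj_on_def) (metis)
  have eqinv: "inv_into (T -` U) (g \<circ> T) y = S (inv_into U g y)" if "y \<in> g ` U" for y
  proof (rule inv_into_f_eq[OF injV])
    have "inv_into U g y \<in> U" using that by (simp add: inv_into_into)
    then show "S (inv_into U g y) \<in> T -` U" by (simp add: TS)
    show "(g \<circ> T) (S (inv_into U g y)) = y" using that by (simp add: TS f_inv_into_f)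
  qed
  have cinv: "continuous_on ((g \<circ> T) ` (T -` U)) (inv_into (T -` U) (g \<circ> T))"
    unfolding im
    by (rule continuous_on_cong[THEN iffD2, OF refl eqinv])
       (auto intro!: continuous_on_compose2[OF contS ci])
  show ?thesis unfolding chart_def
    using oV C2 injd' im sub op injV cinv by auto
qed

lemma iso_reparam:
  fixes L :: "real^'d \<Rightarrow> real^'m"
  assumes lL: "linear L" and iL: "inj L"
  obtains T S :: "real^'d \<Rightarrow> real^'d" where "linear T" "linear S" "\<And>x. S (T x) = x" "\<And>x. T (S x) = x"
    "\<And>h. norm (L (T h)) = norm h"
proof -
  have sub: "subspace (range L)" using lL by (simp add: real_vector.linear_subspace_image)
  have dimeq: "dim (UNIV :: (real^'d) set) = dim (range L)"
    by (rule sym, rule dim_image_eq[OF lL]) (simp add: iL)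
  obtain f :: "real^'d \<Rightarrow> real^'m" where lf: "linear f" and fim: "f ` UNIV = range L"
    and fn: "\<And>x. norm (f x) = norm x"
    by (rule isometry_subspaces[OF subspace_UNIV sub dimeq]) auto
  obtain Li where lLi: "linear Li" and Li: "Li \<circ> L = id" using linear_injective_left_inverse[OF lL iL] by blast
  define T where "T = Li \<circ> f"
  have lT: "linear T" unfolding T_def using lLi lf by (simp add: linear_compose)
  have LT: "L (T h) = f h" for h
  proof -
    have "f h \<in> range L" using fim by blast
    then obtain z where z: "f h = L z" by blast
    have "Li (L z) = z" using fun_cong[OF Li, of z] by simp
    then show ?thesis using z by (simp add: T_def)
  qed
  have nT: "norm (L (T h)) = norm h" for h using LT fn by simp
  have iT: "inj T"
  proof (rule injI)
    fix x y assume "T x = T y"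
    then have "f x = f y" using LT by metis
    then have "norm (f (x - y)) = 0" using lf by (simp add: linear_diff)
    then show "x = y" using fn by simp
  qed
  obtain S where "linear S" "\<forall>x. S (T x) = x" "\<forall>x. T (S x) = x"
    using linear_injective_isomorphism[OF lT iT refl] by blast
  then show ?thesis using that[OF lT] nT by blast
qed

lemma half_ball:
  fixes a :: "real^'d"
  assumes a: "a \<noteq> 0" and R: "R \<ge> 0"
  shows "emeasure lborel (cball 0 R \<inter> {x. 0 \<le> a \<bullet> x}) \<le> ennreal (unit_ball_vol (real CARD('d)) * R ^ CARD('d) / 2)"
proof -
  define P where "P = cball (0::real^'d) R \<inter> {x. 0 \<le> a \<bullet> x}"
  define N where "N = cball (0::real^'d) R \<inter> {x. a \<bullet> x \<le> 0}"
  have mP: "P \<in> sets lborel" unfolding P_def by measurable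
  have mN: "N \<in> sets lborel" unfolding N_def by measurable
  have eq: "distr lborel borel uminus = (lborel :: (real^'d) measure)"
    using lborel_affine[of "-1::real" "0::real^'d"] by (simp add: density_1)
  have "emeasure lborel N = emeasure (distr lborel borel uminus) N" by (simp only: eq)
  also have "\<dots> = emeasure lborel (uminus -` N \<inter> space lborel)"
    by (rule emeasure_distr) (use mN in auto)
  also have "uminus -` N \<inter> space lborel = P" by (auto simp: P_def N_def)
  finally have NP: "emeasure lborel N = emeasure lborel P" .
  have fP: "P \<in> fmeasurable lborel"
    using mP emeasure_mono[of P "cball 0 R" lborel] emeasure_lborel_cball_finite[of 0 R]
    by (auto simp: fmeasurable_def P_def top.not_eq_extremum intro: le_less_trans)
  have fN: "N \<in> fmeasurable lborel"
    using mN emeasure_mono[of N "cball 0 R" lborel] emeasure_lborel_cball_finite[of 0 R]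
    by (auto simp: fmeasurable_def N_def top.not_eq_extremum intro: le_less_trans)
  have H: "{x::real^'d. a \<bullet> x = 0} \<in> null_sets lborel"
  proof -
    have "negligible {x::real^'d. a \<bullet> x = 0}" using a by (intro negligible_hyperplane) auto
    then have n: "{x::real^'d. a \<bullet> x = 0} \<in> null_sets lebesgue" by (simp add: negligible_iff_null_sets)
    have b: "{x::real^'d. a \<bullet> x = 0} \<in> sets lborel" by measurable
    show ?thesis using n b by (auto simp: null_sets_def)
  qed
  have PN0: "measure lborel (P \<inter> N) = 0"
  proof -
    have "P \<inter> N \<subseteq> {x. a \<bullet> x = 0}" by (auto simp: P_def N_def)
    then have "P \<inter> N \<in> null_sets lborel" using H null_sets_subset mP mN by blast
    then show ?thesis by (simp add: measure_def null_setsD1)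
  qed
  have U: "P \<union> N = cball 0 R" by (auto simp: P_def N_def)
  have "measure lborel (cball (0::real^'d) R) = measure lborel P + measure lborel N"
    using measure_Un3[OF fP fN] PN0 U by simp
  moreover have "measure lborel N = measure lborel P" using NP by (simp add: measure_def)
  moreover have "measure lborel (cball (0::real^'d) R) = unit_ball_vol (real CARD('d)) * R ^ CARD('d)"
    using content_cball[OF R, of "0::real^'d"] by simp
  ultimately have "measure lborel P = unit_ball_vol (real CARD('d)) * R ^ CARD('d) / 2" by simp
  moreover have "emeasure lborel P = ennreal (measure lborel P)"
    using fP by (simp add: emeasure_eq_measure2)
  ultimately show ?thesis unfolding P_def by (metis order_refl)
qed

lemma det_cont:
  fixes Q :: "'a::t2_space \<Rightarrow> real^'n^'n"
  assumes "\<And>i j. continuous F (\<lambda>u. Q u $ i $ j)"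
  shows "continuous F (\<lambda>u. det (Q u))"
  unfolding det_def by (intro continuous_intros assms)

lemma J_cont:
  fixes G' :: "real^'d \<Rightarrow> ((real^'d) \<Rightarrow>\<^sub>L (real^'m))"
  assumes c: "isCont G' x0"
  shows "isCont (\<lambda>u. sqrt (det (transpose (matrix (blinfun_apply (G' u))) ** matrix (blinfun_apply (G' u))))) x0"
proof -
  have e: "isCont (\<lambda>u. (transpose (matrix (blinfun_apply (G' u))) ** matrix (blinfun_apply (G' u))) $ i $ j) x0" for i j
    unfolding matrix_matrix_mult_def transpose_def matrix_def
    by (simp, intro continuous_intros c)
  show ?thesis by (intro continuous_intros det_cont e)
qed

lemma J_iso:
  fixes L :: "real^'d \<Rightarrow> real^'m"
  assumes lL: "linear L" and n: "\<And>h. norm (L h) = norm h"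
  shows "det (transpose (matrix L) ** matrix L) = 1"
proof -
  have ip: "L x \<bullet> L y = x \<bullet> y" for x y
    using n[of "x+y"] n[of x] n[of y] by (simp add: dot_norm linear_add[OF lL])
  have "(transpose (matrix L) ** matrix L) $ i $ j = (mat 1 :: real^'d^'d) $ i $ j" for i j
  proof -
    have "(transpose (matrix L) ** matrix L) $ i $ j = L (axis i 1) \<bullet> L (axis j 1)"
      by (simp add: matrix_matrix_mult_def transpose_def matrix_def inner_vec_def)
    also have "\<dots> = (mat 1 :: real^'d^'d) $ i $ j" by (simp add: ip inner_axis_axis mat_def)
    finally show ?thesis .
  qed
  then have "transpose (matrix L) ** matrix L = mat 1" by (simp add: vec_eq_iff)
  then show ?thesis by simp
qed

theorem lemma4p9:
  fixes M A B :: "(real^'m) set" and v :: "(real^'m) measure"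
    and f :: "real^'m \<Rightarrow> real" and \<alpha> :: real
  assumes "2 \<le> CARD('d::finite)" and "CARD('d) \<le> CARD('m)"
    and "closed_C2_submanifold M TYPE('d)"
    and "riemannian_volume M TYPE('d) v"
    and "compact_C2_submanifold_with_boundary M TYPE('d) A"
    and "closed B" and "B \<subseteq> A"
    and "f \<in> borel_measurable borel" and "\<forall>x. 0 \<le> f x"
    and "(\<integral>\<^sup>+ x. ennreal (f x) \<partial>v) = 1"
    and "\<forall>x. x \<notin> A \<longrightarrow> f x = 0"
    and "B \<inter> man_boundary M A = closure ((B - closure (A - B)) \<inter> man_boundary M A)"
    and "B \<inter> man_boundary M A \<noteq> {}"
    and "continuous_on A f"
    and "\<alpha> > Inf (f ` (B \<inter> man_boundary M A))"
  shows "Liminf (at_right 0) (\<lambda>r::real. ereal (r ^ (CARD('d) - 1)) *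
           ereal_of_enat (packing_number M v f B r (\<alpha> * theta CARD('d) * r ^ CARD('d) / 2))) > 0"
proof -
  note d2 = assms(1)
  note RV = assms(4)
  have cA: "compact A" and AM: "A \<subseteq> M"
    and bdch: "\<forall>y\<in>man_boundary M A. \<exists>(U::(real^'d) set) g k. chart M U g \<and> 0 \<in> U \<and> g 0 = y \<and>
        g ` (U \<inter> {x. 0 \<le> x $ k}) = g ` U \<inter> A"
    using assms(5) unfolding compact_C2_submanifold_with_boundary_def by auto
  have clA: "closed A" using cA by (rule compact_imp_closed)
  have BdA: "man_boundary M A \<subseteq> A" using clA by (auto simp: man_boundary_def)
  have f0: "\<And>x. 0 \<le> f x" using assms(9) by auto
  have fout: "\<And>x. x \<notin> A \<Longrightarrow> f x = 0" using assms(11) by auto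
  obtain y where y: "y \<in> B \<inter> man_boundary M A" and fy: "f y < \<alpha>"
  proof -
    have "bdd_below (f ` (B \<inter> man_boundary M A))" using f0 by (intro bdd_belowI[where m=0]) auto
    then show ?thesis using cInf_less_iff[of "f ` (B \<inter> man_boundary M A)" \<alpha>] assms(13,15) that by auto
  qed
  have yA: "y \<in> A" using y assms(7) by auto
  obtain \<delta> where \<delta>: "\<delta> > 0" and \<delta>f: "\<And>z. z \<in> A \<Longrightarrow> dist z y < \<delta> \<Longrightarrow> dist (f z) (f y) < \<alpha> - f y"
    using assms(14) yA fy unfolding continuous_on_iff by (metis diff_gt_0_iff_gt)
  have "y \<in> closure ((B - closure (A - B)) \<inter> man_boundary M A)" using y assms(12) by auto
  then obtain x0 where x0T: "x0 \<in> (B - closure (A - B)) \<inter> man_boundary M A" and "dist x0 y < \<delta>"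
    using \<delta> unfolding closure_approachable by blast
  then have x0A: "x0 \<in> A" and x0B: "x0 \<in> B" and x0bd: "x0 \<in> man_boundary M A" using assms(7) by auto
  have fx0: "f x0 < \<alpha>" using \<delta>f[OF x0A \<open>dist x0 y < \<delta>\<close>] by (simp add: dist_real_def)
  obtain \<epsilon>B where \<epsilon>B: "\<epsilon>B > 0" and \<epsilon>B': "\<And>z. z \<in> A \<Longrightarrow> dist z x0 < \<epsilon>B \<Longrightarrow> z \<in> B"
  proof -
    have "x0 \<notin> closure (A - B)" using x0T by auto
    then obtain e where "e > 0" "\<forall>z\<in>A - B. \<not> dist z x0 < e" unfolding closure_approachable by blast
    then show ?thesis using that by blast
  qed
  define \<alpha>' where "\<alpha>' = (f x0 + \<alpha>) / 2"
  have \<alpha>'1: "f x0 < \<alpha>'" and \<alpha>'2: "\<alpha>' < \<alpha>" and \<alpha>'0: "0 < \<alpha>'" using fx0 f0[of x0] by (auto simp: \<alpha>'_def)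
  obtain \<epsilon>f where \<epsilon>f: "\<epsilon>f > 0" and \<epsilon>f': "\<And>z. z \<in> A \<Longrightarrow> dist z x0 < \<epsilon>f \<Longrightarrow> f z < \<alpha>'"
  proof -
    obtain e where "e > 0" "\<forall>z\<in>A. dist z x0 < e \<longrightarrow> dist (f z) (f x0) < \<alpha>' - f x0"
      using assms(14) x0A \<alpha>'1 unfolding continuous_on_iff by (metis diff_gt_0_iff_gt)
    then show ?thesis using that by (force simp: dist_real_def)
  qed
  \<comment> \<open>Step 6: chart at x0, reparametrised so that the differential at 0 is isometric\<close>
  obtain U0 :: "(real^'d) set" and g0 k where ch0: "chart M U0 g0" and U00: "0 \<in> U0" and g00: "g0 0 = x0"
    and gH: "g0 ` (U0 \<inter> {x. 0 \<le> x $ k}) = g0 ` U0 \<inter> A"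
    using bspec[OF bdch x0bd] by (elim exE conjE) (rule that)
  from ch0 have "C2_on g0 U0" and injd0: "\<forall>x\<in>U0. \<forall>g'. (g0 has_derivative g') (at x) \<longrightarrow> inj g'"
    and inj0: "inj_on g0 U0" by (auto simp: chart_def)
  then obtain G0' :: "real^'d \<Rightarrow> ((real^'d) \<Rightarrow>\<^sub>L (real^'m))" where
    dG0: "\<forall>x\<in>U0. (g0 has_derivative blinfun_apply (G0' x)) (at x)" unfolding C2_on_def by blast
  define L0 where "L0 = blinfun_apply (G0' 0)"
  have dL0: "(g0 has_derivative L0) (at 0)" using dG0 U00 by (simp add: L0_def)
  have lL0: "linear L0" unfolding L0_def by (simp add: blinfun.bounded_linear_right bounded_linear.linear)
  have iL0: "inj L0" using injd0 U00 dL0 by simp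
  obtain T S :: "real^'d \<Rightarrow> real^'d" where lT: "linear T" and lS: "linear S"
    and ST: "\<And>x. S (T x) = x" and TS: "\<And>x. T (S x) = x" and nT: "\<And>h. norm (L0 (T h)) = norm h"
    using iso_reparam[OF lL0 iL0] by blast
  define g where "g = g0 \<circ> T"
  define U where "U = T -` U0"
  have ch: "chart M U g" unfolding g_def U_def by (rule chart_reparam[OF ch0 lT lS ST TS])
  have T0: "T 0 = 0" using lT by (simp add: linear_0)
  have U0': "0 \<in> U" using U00 T0 by (simp add: U_def)
  have g0': "g 0 = x0" using g00 T0 by (simp add: g_def)
  define a where "a = (matrix T) $ k"
  have Ta: "\<And>u. (T u) $ k = a \<bullet> u"
  proof -
    fix u
    have "T u = matrix T *v u" using fun_cong[OF matrix_vector_mul(2)[OF lT], of u] by simp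
    then show "(T u) $ k = a \<bullet> u" by (simp add: a_def matrix_vector_mul_component)
  qed
  have a0: "a \<noteq> 0"
  proof
    assume "a = 0"
    then have "(T (S (axis k 1))) $ k = 0" using Ta by simp
    then show False using TS by simp
  qed
  have gA: "\<And>u. u \<in> U \<Longrightarrow> g u \<in> A \<longleftrightarrow> 0 \<le> a \<bullet> u"
  proof -
    fix u assume u: "u \<in> U"
    then have Tu: "T u \<in> U0" by (simp add: U_def)
    show "g u \<in> A \<longleftrightarrow> 0 \<le> a \<bullet> u"
    proof
      assume "g u \<in> A"
      then have "g0 (T u) \<in> g0 ` (U0 \<inter> {x. 0 \<le> x $ k})" using gH Tu by (simp add: g_def)
      then obtain u' where u': "u' \<in> U0" "0 \<le> u' $ k" "g0 u' = g0 (T u)" by auto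
      then have "u' = T u" using inj0 Tu by (simp add: inj_on_def)
      then show "0 \<le> a \<bullet> u" using u' Ta by simp
    next
      assume "0 \<le> a \<bullet> u"
      then have "g0 (T u) \<in> g0 ` (U0 \<inter> {x. 0 \<le> x $ k})" using Tu Ta by auto
      then show "g u \<in> A" using gH by (simp add: g_def)
    qed
  qed
  from ch have oU: "open U" and c2: "C2_on g U" and sub: "g ` U \<subseteq> M" and op: "openin (top_of_set M) (g ` U)"
    and inj: "inj_on g U" and ci: "continuous_on (g ` U) (inv_into U g)"
    by (auto simp: chart_def)
  from c2 obtain G' :: "real^'d \<Rightarrow> ((real^'d) \<Rightarrow>\<^sub>L (real^'m))" and G'' where
    dG: "\<forall>x\<in>U. (g has_derivative blinfun_apply (G' x)) (at x)" and
    dG': "\<forall>x\<in>U. (G' has_derivative blinfun_apply (G'' x)) (at x)" unfolding C2_on_def by blast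
  define L where "L = blinfun_apply (G' 0)"
  have lL: "linear L" unfolding L_def by (simp add: blinfun.bounded_linear_right bounded_linear.linear)
  have "(g has_derivative L0 \<circ> T) (at 0)"
    unfolding g_def by (rule diff_chain_at[OF linear_imp_has_derivative[OF lT]]) (simp add: T0 dL0)
  moreover have "(g has_derivative L) (at 0)" using dG U0' by (simp add: L_def)
  ultimately have LL0: "L = L0 \<circ> T" by (rule has_derivative_unique[rotated])
  have nL: "\<And>h. norm (L h) = norm h" using nT LL0 by simp
  have cG': "isCont G' 0" using dG' U0' has_derivative_continuous by blast
  define J where "J = (\<lambda>u. sqrt (det (transpose (matrix (blinfun_apply (G' u))) ** matrix (blinfun_apply (G' u)))))"
  have J0: "J 0 = 1" unfolding J_def using J_iso[OF lL nL] by (simp add: L_def)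
  have cJ: "isCont J 0" unfolding J_def by (rule J_cont[OF cG'])
  have cg: "continuous_on U g" using dG by (meson has_derivative_continuous continuous_at_imp_continuous_on)
  have cg0: "isCont g 0" using dG U0' has_derivative_continuous by blast
  define d where "d = CARD('d)"
  have d1: "d \<ge> 2" using d2 by (simp add: d_def)
  define q where "q = \<alpha> / \<alpha>'"
  have q1: "q > 1" using \<alpha>'0 \<alpha>'2 by (simp add: q_def)
  define c where "c = q powr (1 / (2 * real d))"
  have c1: "c > 1" unfolding c_def using q1 d1 by simp
  have cd: "c ^ d = sqrt q"
  proof -
    have "c ^ d = c powr (real d)" using c1 by (simp add: powr_realpow)
    also have "\<dots> = q powr (1/2)" unfolding c_def using d1 by (simp add: powr_powr)
    also have "\<dots> = sqrt q" using q1 by (simp add: powr_half_sqrt)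
    finally show ?thesis .
  qed
  define \<eta> where "\<eta> = min (1/2) (1 - 1/c)"
  have \<eta>0: "\<eta> > 0" using c1 by (simp add: \<eta>_def)
  have \<eta>h: "\<eta> \<le> 1/2" unfolding \<eta>_def by (rule min.cobounded1)
  have \<eta>c: "1 / (1 - \<eta>) \<le> c"
  proof -
    have "1 - \<eta> \<ge> 1 / c" by (simp add: \<eta>_def)
    then show ?thesis using c1 \<eta>h by (simp add: field_simps)
  qed
  obtain \<rho>a where \<rho>a: "\<rho>a > 0" "ball 0 \<rho>a \<subseteq> U" using oU U0' open_contains_ball by blast
  obtain \<rho>b where \<rho>b: "\<rho>b > 0" "\<And>z. dist z 0 < \<rho>b \<Longrightarrow> dist (G' z) (G' 0) < \<eta>"
    using cG' \<eta>0 unfolding continuous_at_eps_delta by blast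
  have sq1: "sqrt q - 1 > 0" using q1 by simp
  obtain \<rho>c where \<rho>c: "\<rho>c > 0" "\<And>z. dist z 0 < \<rho>c \<Longrightarrow> dist (J z) (J 0) < sqrt q - 1"
    using cJ sq1 unfolding continuous_at_eps_delta by blast
  define \<rho> where "\<rho> = min \<rho>a (min \<rho>b \<rho>c)"
  have \<rho>0: "\<rho> > 0" using \<rho>a \<rho>b \<rho>c by (simp add: \<rho>_def)
  have \<rho>U: "ball 0 \<rho> \<subseteq> U" using \<rho>a by (auto simp: \<rho>_def)
  have \<rho>G: "\<And>z. z \<in> ball 0 \<rho> \<Longrightarrow> norm (G' z - G' 0) \<le> \<eta>"
    using \<rho>b by (force simp: \<rho>_def dist_norm dist_commute)
  have \<rho>J: "\<And>z. z \<in> ball 0 \<rho> \<Longrightarrow> J z \<le> sqrt q"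
  proof -
    fix z :: "real^'d" assume "z \<in> ball 0 \<rho>"
    then have "dist z 0 < \<rho>c" by (simp add: \<rho>_def dist_commute)
    then have "dist (J z) 1 < sqrt q - 1" using \<rho>c(2)[of z] J0 by simp
    then show "J z \<le> sqrt q" by (simp add: dist_real_def)
  qed
  have MVT: "norm (g u - g w - L (u - w)) \<le> \<eta> * norm (u - w)" if u: "u \<in> ball 0 \<rho>" and w: "w \<in> ball 0 \<rho>" for u w
  proof -
    have "norm ((\<lambda>x. g x - L x) u - (\<lambda>x. g x - L x) w) \<le> \<eta> * norm (u - w)"
    proof (rule differentiable_bound[where f' = "\<lambda>z h. blinfun_apply (G' z) h - L h"])
      show "convex (ball (0::real^'d) \<rho>)" by simp
      show "((\<lambda>x. g x - L x) has_derivative (\<lambda>h. blinfun_apply (G' z) h - L h)) (at z within ball 0 \<rho>)"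
        if "z \<in> ball 0 \<rho>" for z
      proof -
        have "(g has_derivative blinfun_apply (G' z)) (at z)" using dG \<rho>U that by auto
        moreover have "(L has_derivative L) (at z)" using lL by (simp add: linear_imp_has_derivative)
        ultimately have "((\<lambda>x. g x - L x) has_derivative (\<lambda>h. blinfun_apply (G' z) h - L h)) (at z)"
          by (rule has_derivative_diff)
        then show ?thesis by (rule has_derivative_at_withinI)
      qed
      show "onorm (\<lambda>h. blinfun_apply (G' z) h - L h) \<le> \<eta>" if "z \<in> ball 0 \<rho>" for z
      proof -
        have "(\<lambda>h. blinfun_apply (G' z) h - L h) = blinfun_apply (G' z - G' 0)"
          by (auto simp: L_def blinfun.diff_left)
        then show ?thesis using \<rho>G[OF that] by (simp add: norm_blinfun.rep_eq)
      qed
    qed (use u w in auto)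
    then show ?thesis using lL by (simp add: linear_diff algebra_simps)
  qed
  have lower: "(1 - \<eta>) * norm (u - w) \<le> dist (g u) (g w)" if u: "u \<in> ball 0 \<rho>" and w: "w \<in> ball 0 \<rho>" for u w
  proof -
    have "norm (u - w) = norm (L (u - w))" using nL by simp
    also have "\<dots> \<le> norm (g u - g w) + norm (g u - g w - L (u - w))"
      using norm_triangle_ineq4[of "g u - g w" "g u - g w - L (u - w)"] by simp
    also have "\<dots> \<le> dist (g u) (g w) + \<eta> * norm (u - w)" using MVT[OF u w] by (simp add: dist_norm)
    finally show ?thesis by (simp add: algebra_simps)
  qed
  define hinv where "hinv = inv_into U g"
  have x0gU: "x0 \<in> g ` U" using g0' U0' by force
  have h0: "hinv x0 = 0" unfolding hinv_def using inv_into_f_eq[OF inj U0' g0'] .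
  obtain Oo where oO: "open Oo" and gUO: "g ` U = M \<inter> Oo" using op unfolding openin_open by blast
  obtain \<epsilon>1 where \<epsilon>1: "\<epsilon>1 > 0" "ball x0 \<epsilon>1 \<subseteq> Oo" using oO x0gU gUO open_contains_ball by blast
  obtain \<delta>h where \<delta>h: "\<delta>h > 0" "\<And>z. z \<in> g ` U \<Longrightarrow> dist z x0 < \<delta>h \<Longrightarrow> dist (hinv z) (hinv x0) < \<rho>"
    using ci x0gU \<rho>0 unfolding continuous_on_iff hinv_def by metis
  define \<epsilon> where "\<epsilon> = min \<epsilon>B (min \<epsilon>f (min \<epsilon>1 \<delta>h))"
  have \<epsilon>0: "\<epsilon> > 0" using \<epsilon>B \<epsilon>f \<epsilon>1 \<delta>h by (simp add: \<epsilon>_def)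
  have \<epsilon>M: "z \<in> g ` U \<and> hinv z \<in> ball 0 \<rho>" if "z \<in> M" "dist z x0 < \<epsilon>" for z
  proof -
    have "z \<in> Oo" using that \<epsilon>1 by (auto simp: \<epsilon>_def dist_commute)
    then have z: "z \<in> g ` U" using gUO that by auto
    moreover have "dist (hinv z) 0 < \<rho>" using \<delta>h(2)[OF z] that h0 by (simp add: \<epsilon>_def)
    ultimately show ?thesis by (simp add: dist_commute)
  qed
  have \<epsilon>B'': "z \<in> B" if "z \<in> A" "dist z x0 < \<epsilon>" for z using \<epsilon>B' that by (simp add: \<epsilon>_def)
  have \<epsilon>f'': "f z < \<alpha>'" if "z \<in> A" "dist z x0 < \<epsilon>" for z using \<epsilon>f' that by (simp add: \<epsilon>_def)
  have e2: "\<epsilon> / 2 > 0" using \<epsilon>0 by simp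
  obtain \<delta>g where \<delta>g: "\<delta>g > 0" "\<And>w. dist w 0 < \<delta>g \<Longrightarrow> dist (g w) (g 0) < \<epsilon> / 2"
    using cg0 e2 unfolding continuous_at_eps_delta by blast
  define \<rho>1 where "\<rho>1 = min (\<delta>g / 2) (\<rho> / 2)"
  have \<rho>10: "\<rho>1 > 0" using \<delta>g \<rho>0 by (simp add: \<rho>1_def)
  have \<rho>1\<rho>: "\<rho>1 < \<rho>" using \<rho>0 by (simp add: \<rho>1_def)
  have \<rho>1g: "dist (g w) x0 < \<epsilon> / 2" if "norm w \<le> \<rho>1" for w
    using \<delta>g(2)[of w] that \<delta>g(1) g0' by (simp add: \<rho>1_def)
  have eqT: "distr lborel borel ((+) w) = (lborel :: (real^'d) measure)" for w :: "real^'d"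
    using lborel_affine[of "1::real" w] by (simp add: density_1)
  have uq: "unit_ball_vol (real d) = theta d" by (simp add: unit_ball_vol_def theta_def add.commute)
  have meas: "g w \<in> B \<and> mu v f (gball M (g w) r) \<le> ennreal (\<alpha> * theta d * r ^ d / 2)"
    if w1: "norm w \<le> \<rho>1" and aw: "a \<bullet> w = 0" and r0: "0 < r" and r1: "r < \<epsilon> / 2" and r2: "c * r < \<rho> - \<rho>1" for w r
  proof -
    have wb: "w \<in> ball 0 \<rho>" using w1 \<rho>1\<rho> by simp
    have wU: "w \<in> U" using wb \<rho>U by auto
    have gwA: "g w \<in> A" using gA[OF wU] aw by simp
    have gwx0: "dist (g w) x0 < \<epsilon> / 2" using \<rho>1g[OF w1] .
    have gwB: "g w \<in> B" using \<epsilon>B''[OF gwA] gwx0 \<epsilon>0 by simp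
    define E where "E = cball w (c * r) \<inter> {u. 0 \<le> a \<bullet> u}"
    have EB: "E \<subseteq> ball 0 \<rho>"
    proof
      fix u assume "u \<in> E"
      then have "norm (u - w) \<le> c * r" by (simp add: E_def dist_norm norm_minus_commute)
      then have "norm u \<le> norm w + c * r" using norm_triangle_sub[of u w] by simp
      then show "u \<in> ball 0 \<rho>" using w1 r2 by simp
    qed
    have EU: "E \<subseteq> U" using EB \<rho>U by auto
    have cE: "compact E" unfolding E_def by (intro compact_Int_closed compact_cball closed_halfspace_ge)
    have cgE: "compact (g ` E)" using cE by (intro compact_continuous_image continuous_on_subset[OF cg EU])
    have gEv: "g ` E \<in> sets v" using RV cgE unfolding riemannian_volume_def
      by (simp add: borel_closed compact_imp_closed)
    have Elb: "E \<in> sets lborel" using cE by (simp add: borel_closed compact_imp_closed)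
    have pw: "ennreal (f y) * indicator (gball M (g w) r) y \<le> ennreal \<alpha>' * indicator (g ` E) y" for y
    proof (cases "y \<in> gball M (g w) r \<and> y \<in> A")
      case True
      then have yM: "y \<in> M" and dy: "dist (g w) y \<le> r" and yA: "y \<in> A"
        using gball_sub[of r M "g w"] r0 by auto
      have dyx0: "dist y x0 < \<epsilon>" using dist_triangle[of y x0 "g w"] dy gwx0 r1 by (simp add: dist_commute)
      have fy: "f y < \<alpha>'" using \<epsilon>f''[OF yA dyx0] .
      obtain yU: "y \<in> g ` U" and hb: "hinv y \<in> ball 0 \<rho>" using \<epsilon>M[OF yM dyx0] by blast
      define u where "u = hinv y"
      have uU: "u \<in> U" using yU by (simp add: u_def hinv_def inv_into_into)
      have gu: "g u = y" using yU by (simp add: u_def hinv_def f_inv_into_f)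
      have au: "0 \<le> a \<bullet> u" using gA[OF uU] gu yA by simp
      have "(1 - \<eta>) * norm (u - w) \<le> dist (g u) (g w)" using lower[of u w] hb wb by (simp add: u_def)
      also have "\<dots> \<le> r" using dy gu by (simp add: dist_commute)
      finally have "(1 - \<eta>) * norm (u - w) \<le> r" .
      then have "norm (u - w) \<le> r / (1 - \<eta>)" using \<eta>h by (simp add: field_simps)
      also have "\<dots> = r * (1 / (1 - \<eta>))" by simp
      also have "\<dots> \<le> r * c" using \<eta>c r0 by (intro mult_left_mono) auto
      finally have "u \<in> E" using au by (simp add: E_def dist_norm norm_minus_commute mult.commute)
      then have "y \<in> g ` E" using gu by blast
      then show ?thesis using fy True by (simp add: ennreal_leI)
    next
      case False
      then show ?thesis using fout by (cases "y \<in> gball M (g w) r") auto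
    qed
    have "mu v f (gball M (g w) r) = (\<integral>\<^sup>+ y. ennreal (f y) * indicator (gball M (g w) r) y \<partial>v)"
      by (simp add: mu_def)
    also have "\<dots> \<le> (\<integral>\<^sup>+ y. ennreal \<alpha>' * indicator (g ` E) y \<partial>v)" by (intro nn_integral_mono pw)
    also have "\<dots> = ennreal \<alpha>' * emeasure v (g ` E)" using gEv by (rule nn_integral_cmult_indicator)
    finally have m1: "mu v f (gball M (g w) r) \<le> ennreal \<alpha>' * emeasure v (g ` E)" .
    have "emeasure v (g ` E) = (\<integral>\<^sup>+ x\<in>E. ennreal (J x) \<partial>lborel)"
    proof -
      have RV3: "\<forall>(U::(real^'d) set) g g'. chart M U g \<longrightarrow> (\<forall>x\<in>U. (g has_derivative g' x) (at x)) \<longrightarrow>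
        (\<forall>E \<in> sets lborel. E \<subseteq> U \<longrightarrow>
           emeasure v (g ` E) =
             (\<integral>\<^sup>+ x\<in>E. ennreal (sqrt (det (transpose (matrix (g' x)) ** matrix (g' x)))) \<partial>lborel))"
        using RV unfolding riemannian_volume_def by blast
      show ?thesis unfolding J_def
        by (rule RV3[rule_format, of U g "\<lambda>x. blinfun_apply (G' x)" E]) (use ch dG Elb EU in auto)
    qed
    also have "\<dots> \<le> (\<integral>\<^sup>+ x. ennreal (sqrt q) * indicator E x \<partial>lborel)"
    proof (intro nn_integral_mono)
      fix x show "ennreal (J x) * indicator E x \<le> ennreal (sqrt q) * indicator E x"
      proof (cases "x \<in> E")
        case True
        then have "J x \<le> sqrt q" using \<rho>J EB by blast
        then show ?thesis using True by (simp add: ennreal_leI)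
      qed simp
    qed
    also have "\<dots> = ennreal (sqrt q) * emeasure lborel E" using Elb by (rule nn_integral_cmult_indicator)
    finally have m2: "emeasure v (g ` E) \<le> ennreal (sqrt q) * emeasure lborel E" .
    have "emeasure lborel E = emeasure (distr lborel borel ((+) w)) E" by (simp only: eqT)
    also have "\<dots> = emeasure lborel ((+) w -` E \<inter> space lborel)"
      by (rule emeasure_distr) (use Elb in auto)
    also have "(+) w -` E \<inter> space lborel = cball 0 (c * r) \<inter> {x. 0 \<le> a \<bullet> x}"
      using aw by (auto simp: E_def dist_norm inner_add_right)
    finally have m3: "emeasure lborel E \<le> ennreal (unit_ball_vol (real CARD('d)) * (c * r) ^ CARD('d) / 2)"
      using half_ball[OF a0, of "c * r"] c1 r0 by simp
    have "mu v f (gball M (g w) r) \<le> ennreal \<alpha>' * (ennreal (sqrt q) * ennreal (theta d * (c * r) ^ d / 2))"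
      using m1 m2 m3 uq unfolding d_def
      by (smt (verit, ccfv_SIG) mult_left_mono order_trans zero_le)
    also have "\<dots> = ennreal (\<alpha>' * (sqrt q * (theta d * (c * r) ^ d / 2)))"
    proof -
      have X0: "0 \<le> theta d * (c * r) ^ d / 2" using uq[symmetric] c1 r0 by simp
      have sq0: "0 \<le> sqrt q" using q1 by simp
      show ?thesis using \<alpha>'0 X0 sq0
        by (simp add: ennreal_mult[symmetric] mult_nonneg_nonneg del: ennreal_mult)
    qed
    also have "\<alpha>' * (sqrt q * (theta d * (c * r) ^ d / 2)) = \<alpha> * theta d * r ^ d / 2"
    proof -
      have e1: "(c * r) ^ d = sqrt q * r ^ d" by (simp add: power_mult_distrib cd)
      have e2: "sqrt q * sqrt q = q" using q1 by simp
      have e3: "\<alpha>' * q = \<alpha>" using \<alpha>'0 by (simp add: q_def)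
      have "\<alpha>' * (sqrt q * (theta d * (c * r) ^ d / 2)) = (\<alpha>' * (sqrt q * sqrt q)) * theta d * r ^ d / 2"
        unfolding e1 by (simp add: algebra_simps)
      then show ?thesis unfolding e2 e3 .
    qed
    finally show ?thesis using gwB by simp
  qed
  \<comment> \<open>Step 11: a grid of centres on the flat part\<close>
  obtain BS where BS: "BS > 0" "\<And>x. norm (S x) \<le> BS * norm x" using linear_bounded_pos[OF lS] by blast
  obtain BT where BT: "BT > 0" "\<And>x. norm (T x) \<le> BT * norm x" using linear_bounded_pos[OF lT] by blast
  have lowS: "norm h \<le> BT * norm (S h)" for h using BT(2)[of "S h"] TS[of h] by simp
  define sp where "sp = 5 * BT"
  have sp0: "sp > 0" using BT by (simp add: sp_def)
  have dpos: "real d > 0" using d1 by simp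
  define K where "K = \<rho>1 / (2 * BS * real d * sp)"
  have K0: "K > 0" using \<rho>10 BS sp0 dpos by (simp add: K_def)
  define b where "b = min (\<epsilon> / 2) (min ((\<rho> - \<rho>1) / c) K)"
  have b0: "b > 0" using \<epsilon>0 \<rho>1\<rho> c1 K0 by (simp add: b_def)
  have main: "ereal (K ^ (d - 1)) \<le> ereal (r ^ (d - 1)) *
           ereal_of_enat (packing_number M v f B r (\<alpha> * theta d * r ^ d / 2))"
    if r0: "0 < r" and rb: "r < b" for r
  proof -
    have r1: "r < \<epsilon> / 2" and r2: "c * r < \<rho> - \<rho>1" and r3: "r < K"
      using rb c1 by (auto simp: b_def field_simps)
    define x where "x = \<rho>1 / (BS * real d * sp * r)"
    have x2: "x > 2"
    proof -
      have "2 * (BS * real d * sp * r) < \<rho>1" using r3 BS sp0 dpos by (simp add: K_def field_simps)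
      then show ?thesis using BS sp0 dpos r0 by (simp add: x_def field_simps)
    qed
    define N where "N = nat \<lfloor>x\<rfloor>"
    have Nx: "real N \<le> x" using x2 by (simp add: N_def)
    have Nx2: "real N \<ge> x / 2" using x2 by (simp add: N_def) linarith
    have rN: "r * real N \<ge> K"
    proof -
      have "r * real N \<ge> r * (x / 2)" using Nx2 r0 by (simp add: mult_left_mono)
      moreover have "r * (x / 2) = K" using r0 by (simp add: x_def K_def field_simps)
      ultimately show ?thesis by simp
    qed
    define I where "I = UNIV - {k}"
    define P where "P = PiE I (\<lambda>_. {..<N})"
    define vv where "vv = (\<lambda>n::'d \<Rightarrow> nat. (\<chi> i. if i = k then 0 else real (n i) * sp * r) :: real^'d)"
    define ww where "ww = (\<lambda>n. S (vv n))"
    have aww: "a \<bullet> ww n = 0" for n using Ta[of "ww n"] TS by (simp add: ww_def vv_def)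
    have nww: "norm (ww n) \<le> \<rho>1" if n: "n \<in> P" for n
    proof -
      have "norm (vv n) \<le> (\<Sum>i\<in>UNIV. \<bar>vv n $ i\<bar>)" by (rule norm_le_l1_cart)
      also have "\<dots> \<le> (\<Sum>i\<in>(UNIV::'d set). real N * sp * r)"
      proof (rule sum_mono)
        fix i :: 'd
        show "\<bar>vv n $ i\<bar> \<le> real N * sp * r"
        proof (cases "i = k")
          case False
          then have "n i < N" using n by (auto simp: P_def I_def)
          then have "real (n i) \<le> real N" by simp
          then show ?thesis using False sp0 r0 by (simp add: vv_def mult_right_mono)
        qed (use sp0 r0 in \<open>simp add: vv_def\<close>)
      qed
      also have "\<dots> = real d * real N * sp * r" by (simp add: d_def)
      finally have "norm (vv n) \<le> real d * real N * sp * r" .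
      then have "norm (ww n) \<le> BS * (real d * real N * sp * r)"
        using BS by (metis ww_def mult_left_mono less_imp_le order_trans)
      also have "\<dots> \<le> BS * (real d * x * sp * r)"
        using Nx BS sp0 r0 dpos by (intro mult_left_mono mult_right_mono) auto
      also have "\<dots> = \<rho>1" using BS sp0 r0 dpos by (simp add: x_def field_simps)
      finally show ?thesis .
    qed
    have sep: "dist (g (ww n)) (g (ww n')) > 2 * r" if n: "n \<in> P" and n': "n' \<in> P" and nn: "n \<noteq> n'" for n n'
    proof -
      obtain i where i: "i \<in> I" "n i \<noteq> n' i" using nn PiE_ext[OF n[unfolded P_def] n'[unfolded P_def]] by blast
      have ik: "i \<noteq> k" using i by (simp add: I_def)
      have "1 \<le> \<bar>real (n i) - real (n' i)\<bar>" using i(2) by linarith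
      then have "1 * (sp * r) \<le> \<bar>real (n i) - real (n' i)\<bar> * (sp * r)"
        using sp0 r0 by (intro mult_right_mono) auto
      then have "sp * r \<le> \<bar>real (n i) - real (n' i)\<bar> * (sp * r)" by simp
      also have "\<dots> = \<bar>(vv n - vv n') $ i\<bar>"
      proof -
        have "(vv n - vv n') $ i = (real (n i) - real (n' i)) * (sp * r)"
          using ik by (simp add: vv_def algebra_simps)
        then show ?thesis using sp0 r0 by (simp add: abs_mult)
      qed
      also have "\<dots> \<le> norm (vv n - vv n')" by (rule component_le_norm_cart)
      also have "\<dots> \<le> BT * norm (ww n - ww n')" using lowS[of "vv n - vv n'"] lS by (simp add: ww_def linear_diff)
      finally have "5 * r \<le> norm (ww n - ww n')" using BT by (simp add: sp_def field_simps)
      moreover have "ww n \<in> ball 0 \<rho>" "ww n' \<in> ball 0 \<rho>" using nww n n' \<rho>1\<rho> by fastforce+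
      ultimately have "(1 - \<eta>) * (5 * r) \<le> dist (g (ww n)) (g (ww n'))"
      proof -
        assume h1: "5 * r \<le> norm (ww n - ww n')" and h2: "ww n \<in> ball 0 \<rho>" "ww n' \<in> ball 0 \<rho>"
        have "(1 - \<eta>) * (5 * r) \<le> (1 - \<eta>) * norm (ww n - ww n')"
          using h1 \<eta>h by (intro mult_left_mono) auto
        also have "\<dots> \<le> dist (g (ww n)) (g (ww n'))" using lower[OF h2] .
        finally show ?thesis .
      qed
      moreover have "(1 - \<eta>) * (5 * r) > 2 * r" using \<eta>h r0 by (simp add: algebra_simps)
      ultimately show ?thesis by simp
    qed
    define Sx where "Sx = (\<lambda>n. g (ww n)) ` P"
    have injP: "inj_on (\<lambda>n. g (ww n)) P"
    proof (rule inj_onI, rule ccontr)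
      fix n n' assume "n \<in> P" "n' \<in> P" "g (ww n) = g (ww n')" "n \<noteq> n'"
      then show False using sep[of n n'] r0 by simp
    qed
    have fP: "finite P" by (simp add: P_def I_def finite_PiE)
    have cardI: "card I = d - 1" by (simp add: I_def d_def card_Diff_singleton)
    have cSx: "card Sx = N ^ (d - 1)"
    proof -
      have "card Sx = card P" unfolding Sx_def by (rule card_image[OF injP])
      also have "\<dots> = (\<Prod>i\<in>I. card {..<N})" unfolding P_def by (rule card_PiE) (simp add: I_def)
      also have "\<dots> = N ^ card I" by simp
      finally show ?thesis using cardI by simp
    qed
    have "enat (card Sx) \<le> packing_number M v f B r (\<alpha> * theta d * r ^ d / 2)"
    proof (rule packing_ge)
      show "finite Sx" using fP by (simp add: Sx_def)
      show "Sx \<subseteq> B" using meas nww aww r0 r1 r2 by (auto simp: Sx_def)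
      show "\<forall>x\<in>Sx. \<forall>y\<in>Sx. x \<noteq> y \<longrightarrow> gball M x r \<inter> gball M y r = {}"
      proof (intro ballI impI)
        fix x y assume "x \<in> Sx" "y \<in> Sx" "x \<noteq> y"
        then obtain n n' where nn: "n \<in> P" "n' \<in> P" "x = g (ww n)" "y = g (ww n')" "n \<noteq> n'"
          by (auto simp: Sx_def)
        have dxy: "dist x y > 2 * r" using sep nn by simp
        show "gball M x r \<inter> gball M y r = {}"
        proof (rule ccontr)
          assume "gball M x r \<inter> gball M y r \<noteq> {}"
          then obtain z where "z \<in> gball M x r" "z \<in> gball M y r" by blast
          then have "dist x z \<le> r" "dist y z \<le> r" using gball_sub[of r M] r0 by auto
          then have "dist x y \<le> 2 * r" using dist_triangle[of x y z] by (simp add: dist_commute)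
          then show False using dxy by simp
        qed
      qed
      show "\<forall>x\<in>Sx. mu v f (gball M x r) \<le> ennreal (\<alpha> * theta d * r ^ d / 2)"
        using meas nww aww r0 r1 r2 by (auto simp: Sx_def)
    qed
    then have pn: "ereal (real (N ^ (d - 1))) \<le> ereal_of_enat (packing_number M v f B r (\<alpha> * theta d * r ^ d / 2))"
      using cSx by (metis ereal_of_enat_le_iff ereal_of_enat_simps(1))
    have "ereal (K ^ (d - 1)) \<le> ereal ((r * real N) ^ (d - 1))"
      using rN K0 by (simp add: power_mono)
    also have "\<dots> = ereal (r ^ (d - 1)) * ereal (real (N ^ (d - 1)))" by (simp add: power_mult_distrib)
    also have "\<dots> \<le> ereal (r ^ (d - 1)) * ereal_of_enat (packing_number M v f B r (\<alpha> * theta d * r ^ d / 2))"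
      using pn r0 by (intro ereal_mult_left_mono) auto
    finally show ?thesis .
  qed
  have ev: "eventually (\<lambda>r. ereal (K ^ (d - 1)) \<le> ereal (r ^ (d - 1)) *
           ereal_of_enat (packing_number M v f B r (\<alpha> * theta d * r ^ d / 2))) (at_right 0)"
    unfolding eventually_at_right_field using b0 main by auto
  have "0 < ereal (K ^ (d - 1))" using K0 by simp
  also have "\<dots> \<le> Liminf (at_right 0) (\<lambda>r::real. ereal (r ^ (d - 1)) *
           ereal_of_enat (packing_number M v f B r (\<alpha> * theta d * r ^ d / 2)))"
    by (rule Liminf_bounded[OF ev])
  finally show ?thesis by (simp add: d_def)
qed

end
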